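(* Let $\mathcal{C}_1,\dots,\mathcal{C}_D\subseteq\mathbb{F}_q^n$ be linear codes and $M\subseteq[n]^D$. Then $M$ is inner-generated for the code $\mathcal{C}_1\boxplus\cdots\boxplus\mathcal{C}_D$ if and only if $M$ is extendable in $\mathcal{C}_1^\perp\otimes\cdots\otimes\mathcal{C}_D^\perp$.
   Context: For $n,D\in\mathbb{N}$ and $i\in[D]$, $\mathcal{L}_i$ is the set of lines in $[n]^D$ parallel to the $i$-th axis (sets $A_1\times\cdots\times A_D$ with $A_i=[n]$, $|A_j|=1$ for $j\ne i$), and $\mathcal{L}=\bigcup_i\mathcal{L}_i$; a line in $\mathcal{L}_i$ is identified with $[n]$ via the $i$-th coordinate. For codes $\mathcal{B}_1,\dots,\mathcal{B}_D\subseteq\mathbb{F}_q^n$, the product code is $\mathcal{B}_1\otimes\cdots\otimes\mathcal{B}_D=\{c\in\mathbb{F}_q^{[n]^D}: c|_\ell\in\mathcal{B}_i\ \forall i\in[D],\ \forall \ell\in\mathcal{L}_i\}$; $\mathcal{B}^{(i)}=\{c: c|_\ell\in\mathcal{B}_i\ \forall\ell\in\mathcal{L}_i\}$ and $\mathcal{B}_1\boxplus\cdots\boxplus\mathcal{B}_D=\sum_i\mathcal{B}^{(i)}$. For $\ell\in\mathcal{L}_i$ let $\mathcal{B}_\ell=\{c\in\mathbb{F}_q^{[n]^D}:\operatorname{supp}c\subseteq\ell,\ c|_\ell\in\mathcal{B}_i\}$. For $M\subseteq[n]^D$, $L(M)=\{\ell\in\mathcal{L}:\ell\subseteq M\}$.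 $M$ is inner-generated for $\mathcal{B}_1\boxplus\cdots\boxplus\mathcal{B}_D$ if every codeword $c$ of this code with $\operatorname{supp}c\subseteq M$ lies in $\sum_{\ell\in L(M)}\mathcal{B}_\ell$. $M$ is extendable for $\mathcal{B}_1\otimes\cdots\otimes\mathcal{B}_D$ if every $c_M\in\mathbb{F}_q^M$ with $c_M|_\ell\in\mathcal{B}_i$ for all $i\in[D]$ and $\ell\in L(M)\cap\mathcal{L}_i$ extends to some $c\in\mathcal{B}_1\otimes\cdots\otimes\mathcal{B}_D$ with $c|_M=c_M$. $\mathcal{C}^\perp$ is the dual code. *)

theory Defs
  imports Main "HOL-Library.Function_Algebras"
begin

text \<open>Conventions: the coordinate set [n] is a finite type 'n (n = CARD('n)),
  the direction set [D] is a finite type 'd (D = CARD('d)), points of [n]^D are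
  functions 'd \<Rightarrow> 'n, words in F_q^{[n]^D} are functions ('d \<Rightarrow> 'n) \<Rightarrow> 'f,
  and words in F_q^n are functions 'n \<Rightarrow> 'f.\<close>

definition lin_code :: "('n \<Rightarrow> 'f::field) set \<Rightarrow> bool" where
  "lin_code C \<longleftrightarrow> (\<lambda>_. 0) \<in> C \<and> (\<forall>x\<in>C. \<forall>y\<in>C. (\<lambda>t. x t + y t) \<in> C)
     \<and> (\<forall>a. \<forall>x\<in>C. (\<lambda>t. a * x t) \<in> C)"

definition dual_code :: "('n::finite \<Rightarrow> 'f::field) set \<Rightarrow> ('n \<Rightarrow> 'f) set" where
  "dual_code C = {v. \<forall>c\<in>C. (\<Sum>t\<in>UNIV. v t * c t) = 0}"

definition line :: "'d \<Rightarrow> ('d \<Rightarrow> 'n) \<Rightarrow> ('d \<Rightarrow> 'n) set" where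
  "line i x = {y. \<forall>j. j \<noteq> i \<longrightarrow> y j = x j}"

definition lines :: "'d \<Rightarrow> ('d \<Rightarrow> 'n) set set" where
  "lines i = range (line i)"

definition restr :: "(('d \<Rightarrow> 'n) \<Rightarrow> 'f) \<Rightarrow> 'd \<Rightarrow> ('d \<Rightarrow> 'n) \<Rightarrow> ('n \<Rightarrow> 'f)" where
  "restr c i x = (\<lambda>t. c (x(i := t)))"

definition prod_code :: "('d \<Rightarrow> ('n \<Rightarrow> 'f) set) \<Rightarrow> (('d \<Rightarrow> 'n) \<Rightarrow> 'f) set" where
  "prod_code C = {c. \<forall>i. \<forall>L\<in>lines i. \<forall>x\<in>L. restr c i x \<in> C i}"

definition dir_code :: "('d \<Rightarrow> ('n \<Rightarrow> 'f) set) \<Rightarrow> 'd \<Rightarrow> (('d \<Rightarrow> 'n) \<Rightarrow> 'f) set" where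
  "dir_code C i = {c. \<forall>L\<in>lines i. \<forall>x\<in>L. restr c i x \<in> C i}"

definition boxplus_code ::
  "('d::finite \<Rightarrow> ('n \<Rightarrow> 'f::field) set) \<Rightarrow> (('d \<Rightarrow> 'n) \<Rightarrow> 'f) set" where
  "boxplus_code C = {(\<Sum>i\<in>UNIV. f i) | f. \<forall>i. f i \<in> dir_code C i}"

definition line_code ::
  "('d \<Rightarrow> ('n \<Rightarrow> 'f::zero) set) \<Rightarrow> 'd \<Rightarrow> ('d \<Rightarrow> 'n) set \<Rightarrow> (('d \<Rightarrow> 'n) \<Rightarrow> 'f) set" where
  "line_code C i L = {c. (\<forall>y. y \<notin> L \<longrightarrow> c y = 0) \<and> (\<forall>x\<in>L. restr c i x \<in> C i)}"

definition lines_in :: "('d \<Rightarrow> 'n) set \<Rightarrow> ('d \<times> ('d \<Rightarrow> 'n) set) set" where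
  "lines_in M = {(i, L). L \<in> lines i \<and> L \<subseteq> M}"

definition inner_span ::
  "('d::finite \<Rightarrow> ('n::finite \<Rightarrow> 'f::field) set) \<Rightarrow> ('d \<Rightarrow> 'n) set \<Rightarrow> (('d \<Rightarrow> 'n) \<Rightarrow> 'f) set" where
  "inner_span C M = {(\<Sum>p\<in>lines_in M. g p) | g. \<forall>p\<in>lines_in M. g p \<in> line_code C (fst p) (snd p)}"

definition inner_generated ::
  "('d::finite \<Rightarrow> ('n::finite \<Rightarrow> 'f::field) set) \<Rightarrow> ('d \<Rightarrow> 'n) set \<Rightarrow> bool" where
  "inner_generated C M \<longleftrightarrow>
     (\<forall>c\<in>boxplus_code C. {y. c y \<noteq> 0} \<subseteq> M \<longrightarrow> c \<in> inner_span C M)"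

text \<open>A partial word c_M on M is represented by a total function whose values outside M
  are irrelevant.\<close>
definition extendable ::
  "('d::finite \<Rightarrow> ('n::finite \<Rightarrow> 'f::field) set) \<Rightarrow> ('d \<Rightarrow> 'n) set \<Rightarrow> bool" where
  "extendable C M \<longleftrightarrow>
     (\<forall>cM :: ('d \<Rightarrow> 'n) \<Rightarrow> 'f.
        (\<forall>(i, L)\<in>lines_in M. \<forall>x\<in>L. restr cM i x \<in> C i) \<longrightarrow>
        (\<exists>c\<in>prod_code C. \<forall>y\<in>M. c y = cM y))"

end

theory Submission imports Defs "HOL.Vector_Spaces" begin

lemma sum_fun_app: "(sum f A) x = (\<Sum>a\<in>A. f a x)" for f :: "'a \<Rightarrow> 'b \<Rightarrow> 'c::comm_monoid_add"
  by (induct A rule: infinite_finite_induct) (simp_all add: plus_fun_def)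

lemma separation:
  fixes S :: "('x::finite \<Rightarrow> 'f::field) set" and v :: "'x \<Rightarrow> 'f"
  assumes S0: "(\<lambda>_. 0) \<in> S" and Sadd: "\<forall>a\<in>S. \<forall>b\<in>S. (\<lambda>t. a t + b t) \<in> S"
    and Ssc: "\<forall>c. \<forall>a\<in>S. (\<lambda>t. c * a t) \<in> S" and v: "v \<notin> S"
  shows "\<exists>w. (\<forall>s\<in>S. (\<Sum>t\<in>UNIV. w t * s t) = 0) \<and> (\<Sum>t\<in>UNIV. w t * v t) \<noteq> 0"
proof -
  define sc where "sc = (\<lambda>(c::'f) (a::'x \<Rightarrow> 'f) t. c * a t)"
  interpret V: vector_space sc
    by unfold_locales (auto simp: sc_def fun_eq_iff plus_fun_def algebra_simps)
  interpret F: vector_space "(*) :: 'f \<Rightarrow> 'f \<Rightarrow> 'f"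
    by unfold_locales (auto simp: algebra_simps)
  interpret P: vector_space_pair sc "(*) :: 'f \<Rightarrow> 'f \<Rightarrow> 'f" ..
  have sub: "V.subspace S"
    unfolding V.subspace_def using S0 Sadd Ssc
    by (auto simp: sc_def plus_fun_def zero_fun_def)
  then have spS: "V.span S = S" by (simp add: V.span_eq_iff)
  obtain B0 where B0: "B0 \<subseteq> S" "V.independent B0" "S \<subseteq> V.span B0"
    using V.maximal_independent_subset by blast
  have "V.span B0 \<subseteq> S" using B0(1) spS V.span_mono by blast
  with v have vB0: "v \<notin> V.span B0" by blast
  have indep: "V.independent (insert v B0)"
    using V.independent_insertI[OF vB0 B0(2)] .
  define phi where "phi = P.construct (insert v B0) (\<lambda>b. if b = v then 1 else 0)"
  have lin: "Vector_Spaces.linear sc ((*) :: 'f \<Rightarrow> 'f \<Rightarrow> 'f) phi" unfolding phi_def using P.linear_construct[OF indep] by blast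
  have phiv: "phi v = 1" unfolding phi_def using P.construct_basis[OF indep] by simp
  have phiB: "phi b = 0" if "b \<in> B0" for b
    unfolding phi_def using P.construct_basis[OF indep] that vB0 V.span_base by fastforce
  have lin0: "Vector_Spaces.linear sc ((*) :: 'f \<Rightarrow> 'f \<Rightarrow> 'f) (\<lambda>_. 0::'f)"
    by (simp add: linear_iff sc_def V.vector_space_axioms[unfolded sc_def] F.vector_space_axioms)
  have phiS: "phi s = 0" if "s \<in> S" for s
    using P.linear_eq_on[OF lin lin0, of s B0] phiB B0(3) that by blast
  define w where "w t = phi (\<lambda>x. if x = t then 1 else 0)" for t
  have rep: "phi a = (\<Sum>t\<in>UNIV. w t * a t)" for a
  proof -
    interpret L: Vector_Spaces.linear sc "(*) :: 'f \<Rightarrow> 'f \<Rightarrow> 'f" phi by fact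
    have "a = (\<Sum>t\<in>UNIV. sc (a t) (\<lambda>x. if x = t then 1 else 0))"
      by (rule ext) (simp add: sum_fun_app sc_def if_distrib cong: if_cong)
    then have "phi a = (\<Sum>t\<in>UNIV. phi (sc (a t) (\<lambda>x. if x = t then 1 else 0)))"
      by (metis L.sum)
    also have "\<dots> = (\<Sum>t\<in>UNIV. w t * a t)"
      by (simp add: L.scale w_def mult.commute)
    finally show ?thesis .
  qed
  show ?thesis
    by (rule exI[of _ w]) (use phiS phiv rep in auto)
qed

lemma restr_add: "restr (\<lambda>y. a y + b y) i x = (\<lambda>t. restr a i x t + restr b i x t)"
  by (simp add: restr_def)
lemma restr_scale: "restr (\<lambda>y. k * a y) i x = (\<lambda>t. k * restr a i x t)"
  by (simp add: restr_def)
lemma restr_zero: "restr (\<lambda>y. 0) i x = (\<lambda>t. 0)"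
  by (simp add: restr_def)

lemma lin_code_dual: "lin_code (dual_code (C :: ('n::finite \<Rightarrow> 'f::field) set))"
  unfolding lin_code_def dual_code_def
  by (auto simp: distrib_right sum.distrib mult.assoc sum_distrib_left[symmetric])

lemma line_self: "x \<in> line i x" by (simp add: line_def)
lemma line_upd: "x(i := t) \<in> line i x" by (simp add: line_def)
lemma line_upd_iff: "x'(i := t) \<in> line i x \<longleftrightarrow> x' \<in> line i x" by (simp add: line_def)
lemma line_eq: "y \<in> line i x \<Longrightarrow> line i y = line i x" by (auto simp: line_def)
lemma mem_line: "y \<in> line i x \<longleftrightarrow> y = x(i := y i)" by (auto simp: line_def fun_eq_iff)

lemma prod_code_iff: "c \<in> prod_code C \<longleftrightarrow> (\<forall>i x. restr c i x \<in> C i)"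
  unfolding prod_code_def lines_def using line_self by fastforce
lemma dir_code_iff: "c \<in> dir_code C i \<longleftrightarrow> (\<forall>x. restr c i x \<in> C i)"
  unfolding dir_code_def lines_def using line_self by fastforce
lemma lines_in_iff: "(i, L) \<in> lines_in M \<longleftrightarrow> (\<exists>x. L = line i x) \<and> L \<subseteq> M"
  unfolding lines_in_def lines_def by auto

lemma sum_line:
  fixes g :: "('d \<Rightarrow> 'n::finite) \<Rightarrow> 'f::comm_monoid_add"
  assumes "\<forall>y. y \<notin> line i x \<longrightarrow> g y = 0" and "finite (UNIV :: ('d \<Rightarrow> 'n) set)"
  shows "(\<Sum>y\<in>UNIV. g y) = (\<Sum>t\<in>UNIV. g (x(i:=t)))"
proof -
  have "(\<Sum>y\<in>UNIV. g y) = (\<Sum>y\<in>line i x. g y)"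
    by (rule sum.mono_neutral_right) (use assms in auto)
  also have "line i x = range (\<lambda>t. x(i:=t))"
    using mem_line line_upd by (metis (mono_tags, lifting) image_iff rangeI subsetI subset_antisym)
  also have "(\<Sum>y\<in>range (\<lambda>t. x(i:=t)). g y) = (\<Sum>t\<in>UNIV. g (x(i:=t)))"
  proof -
    have inj: "inj (\<lambda>t. x(i:=t))" by (rule injI) (metis fun_upd_same)
    show ?thesis using sum.reindex[OF inj, of g] by (simp add: comp_def)
  qed
  finally show ?thesis .
qed

lemma sum_lines:
  fixes F :: "('d \<Rightarrow> 'n::finite) \<Rightarrow> 'f::comm_monoid_add"
  shows "(\<Sum>y\<in>UNIV. F y) = (\<Sum>x\<in>{x. x i = a}. \<Sum>t\<in>UNIV. F (x(i:=t)))"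
proof -
  have "(\<Sum>x\<in>{x. x i = a}. \<Sum>t\<in>UNIV. F (x(i:=t))) = (\<Sum>(x,t)\<in>{x. x i = a} \<times> UNIV. F (x(i:=t)))"
    by (rule sum.cartesian_product)
  also have "\<dots> = (\<Sum>p\<in>{x. x i = a} \<times> UNIV. F ((\<lambda>(x,t). x(i:=t)) p))"
    by (rule sum.cong) auto
  also have "\<dots> = (\<Sum>y\<in>UNIV. F y)"
  proof (rule sum.reindex_bij_betw)
    show "bij_betw (\<lambda>(x,t). x(i:=t)) ({x. x i = a} \<times> (UNIV :: 'n set)) UNIV"
      by (rule bij_betw_byWitness[where f'="\<lambda>y. (y(i:=a), y i)"]) auto
  qed
  finally show ?thesis by simp
qed


definition emb :: "'d \<Rightarrow> ('d \<Rightarrow> 'n) \<Rightarrow> ('n \<Rightarrow> 'f::zero) \<Rightarrow> ('d \<Rightarrow> 'n) \<Rightarrow> 'f" where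
  "emb i x c = (\<lambda>y. if y \<in> line i x then c (y i) else 0)"

lemma restr_emb: "restr (emb i x c) i x' = (if x' \<in> line i x then c else (\<lambda>_. 0))"
  by (auto simp: restr_def emb_def line_upd_iff)

lemma emb_out: "y \<notin> line i x \<Longrightarrow> emb i x c y = 0"
  by (simp add: emb_def)

lemma ip_emb:
  fixes u :: "('d::finite \<Rightarrow> 'n::finite) \<Rightarrow> 'f::field"
  shows "(\<Sum>y\<in>UNIV. u y * emb i x c y) = (\<Sum>t\<in>UNIV. restr u i x t * c t)"
proof -
  have "(\<Sum>y\<in>UNIV. u y * emb i x c y) = (\<Sum>t\<in>UNIV. u (x(i:=t)) * emb i x c (x(i:=t)))"
    by (rule sum_line) (auto simp: emb_def)
  also have "\<dots> = (\<Sum>t\<in>UNIV. restr u i x t * c t)"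
    by (simp add: emb_def restr_def line_upd)
  finally show ?thesis .
qed

lemma emb_dir:
  assumes "lin_code (C i)" "c \<in> C i"
  shows "emb i x c \<in> dir_code C i"
  using assms unfolding dir_code_iff restr_emb lin_code_def by auto

lemma emb_line_code:
  assumes "lin_code (C i)" "c \<in> C i"
  shows "emb i x c \<in> line_code C i (line i x)"
  using assms unfolding line_code_def lin_code_def
  by (auto simp: emb_out line_eq restr_emb)

lemma orth_dir:
  fixes C :: "'d::finite \<Rightarrow> ('n::finite \<Rightarrow> 'f::field) set"
  assumes c: "c \<in> prod_code (\<lambda>i. dual_code (C i))" and f: "f \<in> dir_code C i"
  shows "(\<Sum>y\<in>UNIV. c y * f y) = 0"
proof -
  have "(\<Sum>y\<in>UNIV. c y * f y) = (\<Sum>x\<in>{x. x i = undefined}. \<Sum>t\<in>UNIV. c (x(i:=t)) * f (x(i:=t)))"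
    by (rule sum_lines)
  also have "\<dots> = 0"
  proof (rule sum.neutral, rule ballI)
    fix x
    have "restr c i x \<in> dual_code (C i)" "restr f i x \<in> C i"
      using c f by (auto simp: prod_code_iff dir_code_iff)
    then show "(\<Sum>t\<in>UNIV. c (x(i:=t)) * f (x(i:=t))) = 0"
      by (auto simp: dual_code_def restr_def)
  qed
  finally show ?thesis .
qed

lemma orth_boxplus:
  fixes C :: "'d::finite \<Rightarrow> ('n::finite \<Rightarrow> 'f::field) set"
  assumes c: "c \<in> prod_code (\<lambda>i. dual_code (C i))" and w: "w \<in> boxplus_code C"
  shows "(\<Sum>y\<in>UNIV. c y * w y) = 0"
proof -
  obtain f where f: "\<forall>i. f i \<in> dir_code C i" and wf: "w = (\<Sum>i\<in>UNIV. f i)"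
    using w by (auto simp: boxplus_code_def)
  have "(\<Sum>y\<in>UNIV. c y * w y) = (\<Sum>y\<in>UNIV. \<Sum>i\<in>UNIV. c y * f i y)"
    by (simp add: wf sum_fun_app sum_distrib_left)
  also have "\<dots> = (\<Sum>i\<in>UNIV. \<Sum>y\<in>UNIV. c y * f i y)"
    by (rule sum.swap)
  also have "\<dots> = 0"
    by (rule sum.neutral) (use orth_dir[OF c] f in blast)
  finally show ?thesis .
qed


lemma prod_code_lin:
  assumes "\<forall>i. lin_code (D i)"
  shows "(\<lambda>_. 0) \<in> prod_code D"
    "\<forall>a\<in>prod_code D. \<forall>b\<in>prod_code D. (\<lambda>t. a t + b t) \<in> prod_code D"
    "\<forall>k. \<forall>a\<in>prod_code D. (\<lambda>t. k * a t) \<in> prod_code D"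
  using assms by (auto simp: prod_code_iff restr_add restr_scale restr_zero lin_code_def)

lemma dir_code_lin:
  assumes "\<forall>i. lin_code (D i)"
  shows "(\<lambda>_. 0) \<in> dir_code D i"
    "\<forall>a\<in>dir_code D i. \<forall>b\<in>dir_code D i. (\<lambda>t. a t + b t) \<in> dir_code D i"
    "\<forall>k. \<forall>a\<in>dir_code D i. (\<lambda>t. k * a t) \<in> dir_code D i"
  using assms by (auto simp: dir_code_iff restr_add restr_scale restr_zero lin_code_def)

lemma line_code_lin:
  assumes "\<forall>i. lin_code (D i)"
  shows "(\<lambda>_. 0) \<in> line_code D i L"
    "\<forall>a\<in>line_code D i L. \<forall>b\<in>line_code D i L. (\<lambda>t. a t + b t) \<in> line_code D i L"
    "\<forall>k. \<forall>a\<in>line_code D i L. (\<lambda>t. k * a t) \<in> line_code D i L"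
  using assms by (auto simp: line_code_def restr_add restr_scale restr_zero lin_code_def)

lemma boxplus_lin:
  fixes D :: "'d::finite \<Rightarrow> ('n \<Rightarrow> 'f::field) set"
  assumes "\<forall>i. lin_code (D i)"
  shows "(\<lambda>_. 0) \<in> boxplus_code D"
    "\<forall>a\<in>boxplus_code D. \<forall>b\<in>boxplus_code D. (\<lambda>t. a t + b t) \<in> boxplus_code D"
    "\<forall>k. \<forall>a\<in>boxplus_code D. (\<lambda>t. k * a t) \<in> boxplus_code D"
proof -
  note L = dir_code_lin[OF assms]
  show "(\<lambda>_. 0) \<in> boxplus_code D"
    unfolding boxplus_code_def
    by (rule CollectI, rule exI[of _ "\<lambda>i. (\<lambda>_. 0)"]) (auto simp: L sum_fun_app fun_eq_iff)
  show "\<forall>a\<in>boxplus_code D. \<forall>b\<in>boxplus_code D. (\<lambda>t. a t + b t) \<in> boxplus_code D"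
  proof (intro ballI)
    fix a b assume "a \<in> boxplus_code D" "b \<in> boxplus_code D"
    then obtain f g where f: "\<forall>i. f i \<in> dir_code D i" "a = (\<Sum>i\<in>UNIV. f i)"
      and g: "\<forall>i. g i \<in> dir_code D i" "b = (\<Sum>i\<in>UNIV. g i)"
      unfolding boxplus_code_def by blast
    show "(\<lambda>t. a t + b t) \<in> boxplus_code D"
      unfolding boxplus_code_def
      by (rule CollectI, rule exI[of _ "\<lambda>i. (\<lambda>t. f i t + g i t)"])
        (use f g L in \<open>auto simp: sum_fun_app fun_eq_iff sum.distrib\<close>)
  qed
  show "\<forall>k. \<forall>a\<in>boxplus_code D. (\<lambda>t. k * a t) \<in> boxplus_code D"
  proof (intro allI ballI)
    fix k a assume "a \<in> boxplus_code D"
    then obtain f where f: "\<forall>i. f i \<in> dir_code D i" "a = (\<Sum>i\<in>UNIV. f i)"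
      unfolding boxplus_code_def by blast
    show "(\<lambda>t. k * a t) \<in> boxplus_code D"
      unfolding boxplus_code_def
      by (rule CollectI, rule exI[of _ "\<lambda>i. (\<lambda>t. k * f i t)"])
        (use f L in \<open>auto simp: sum_fun_app fun_eq_iff sum_distrib_left\<close>)
  qed
qed

lemma inner_span_lin:
  fixes D :: "'d::finite \<Rightarrow> ('n::finite \<Rightarrow> 'f::field) set"
  assumes "\<forall>i. lin_code (D i)"
  shows "(\<lambda>_. 0) \<in> inner_span D M"
    "\<forall>a\<in>inner_span D M. \<forall>b\<in>inner_span D M. (\<lambda>t. a t + b t) \<in> inner_span D M"
    "\<forall>k. \<forall>a\<in>inner_span D M. (\<lambda>t. k * a t) \<in> inner_span D M"
proof -
  note L = line_code_lin[OF assms]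
  show "(\<lambda>_. 0) \<in> inner_span D M"
    unfolding inner_span_def
    by (rule CollectI, rule exI[of _ "\<lambda>p. (\<lambda>_. 0)"]) (auto simp: L sum_fun_app fun_eq_iff)
  show "\<forall>a\<in>inner_span D M. \<forall>b\<in>inner_span D M. (\<lambda>t. a t + b t) \<in> inner_span D M"
  proof (intro ballI)
    fix a b assume "a \<in> inner_span D M" "b \<in> inner_span D M"
    then obtain f g where f: "\<forall>p\<in>lines_in M. f p \<in> line_code D (fst p) (snd p)" "a = (\<Sum>p\<in>lines_in M. f p)"
      and g: "\<forall>p\<in>lines_in M. g p \<in> line_code D (fst p) (snd p)" "b = (\<Sum>p\<in>lines_in M. g p)"
      unfolding inner_span_def by blast
    show "(\<lambda>t. a t + b t) \<in> inner_span D M"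
      unfolding inner_span_def
      by (rule CollectI, rule exI[of _ "\<lambda>p. (\<lambda>t. f p t + g p t)"])
        (use f g L in \<open>auto simp: sum_fun_app fun_eq_iff sum.distrib\<close>)
  qed
  show "\<forall>k. \<forall>a\<in>inner_span D M. (\<lambda>t. k * a t) \<in> inner_span D M"
  proof (intro allI ballI)
    fix k a assume "a \<in> inner_span D M"
    then obtain f where f: "\<forall>p\<in>lines_in M. f p \<in> line_code D (fst p) (snd p)" "a = (\<Sum>p\<in>lines_in M. f p)"
      unfolding inner_span_def by blast
    show "(\<lambda>t. k * a t) \<in> inner_span D M"
      unfolding inner_span_def
      by (rule CollectI, rule exI[of _ "\<lambda>p. (\<lambda>t. k * f p t)"])
        (use f L in \<open>auto simp: sum_fun_app fun_eq_iff sum_distrib_left\<close>)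
  qed
qed


lemma dir_in_boxplus:
  fixes C :: "'d::finite \<Rightarrow> ('n \<Rightarrow> 'f::field) set"
  assumes "\<forall>i. lin_code (C i)" "e \<in> dir_code C i"
  shows "e \<in> boxplus_code C"
proof -
  have z: "(\<lambda>_. 0) \<in> dir_code C j" for j using dir_code_lin[OF assms(1)] by blast
  have "\<forall>j. (if j = i then e else 0) \<in> dir_code C j"
    using z assms(2) by (auto simp: zero_fun_def)
  moreover have "e = (\<Sum>j\<in>UNIV. (if j = i then e else 0))" by simp
  ultimately show ?thesis unfolding boxplus_code_def by blast
qed

theorem proposition1:
  fixes C :: "'d::finite \<Rightarrow> ('n::finite \<Rightarrow> 'f::{field,finite}) set"
    and M :: "('d \<Rightarrow> 'n) set"
  assumes "\<forall>i. lin_code (C i)"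
  shows "inner_generated C M \<longleftrightarrow> extendable (\<lambda>i. dual_code (C i)) M"
proof
  assume IG: "inner_generated C M"
  show "extendable (\<lambda>i. dual_code (C i)) M"
    unfolding extendable_def
  proof (intro allI impI)
    fix cM :: "('d \<Rightarrow> 'n) \<Rightarrow> 'f"
    assume H: "\<forall>(i, L)\<in>lines_in M. \<forall>x\<in>L. restr cM i x \<in> dual_code (C i)"
    show "\<exists>c\<in>prod_code (\<lambda>i. dual_code (C i)). \<forall>y\<in>M. c y = cM y"
    proof (rule ccontr)
      assume nex: "\<not> ?thesis"
      define P where "P = prod_code (\<lambda>i. dual_code (C i))"
      define S where "S = {s. \<exists>p\<in>P. \<forall>y\<in>M. s y = p y}"
      note PL = prod_code_lin[of "\<lambda>i. dual_code (C i)", OF allI[OF lin_code_dual], folded P_def]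
      have cMS: "cM \<notin> S" using nex unfolding S_def P_def by fastforce
      have S0: "(\<lambda>_. 0) \<in> S" unfolding S_def using PL(1) by (intro CollectI bexI[of _ "\<lambda>_. 0"]) auto
      have Sadd: "\<forall>a\<in>S. \<forall>b\<in>S. (\<lambda>t. a t + b t) \<in> S"
      proof (intro ballI)
        fix a b assume "a \<in> S" "b \<in> S"
        then obtain p q where "p \<in> P" "\<forall>y\<in>M. a y = p y" "q \<in> P" "\<forall>y\<in>M. b y = q y"
          unfolding S_def by blast
        then show "(\<lambda>t. a t + b t) \<in> S" unfolding S_def using PL(2)
          by (intro CollectI bexI[of _ "\<lambda>t. p t + q t"]) auto
      qed
      have Ssc: "\<forall>k. \<forall>a\<in>S. (\<lambda>t. k * a t) \<in> S"
      proof (intro allI ballI)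
        fix k a assume "a \<in> S"
        then obtain p where "p \<in> P" "\<forall>y\<in>M. a y = p y"
          unfolding S_def by blast
        then show "(\<lambda>t. k * a t) \<in> S" unfolding S_def using PL(3)
          by (intro CollectI bexI[of _ "\<lambda>t. k * p t"]) auto
      qed
      obtain w where w1: "\<forall>s\<in>S. (\<Sum>t\<in>UNIV. w t * s t) = 0"
        and w2: "(\<Sum>t\<in>UNIV. w t * cM t) \<noteq> 0"
        using separation[OF S0 Sadd Ssc cMS] by blast
      have wsupp: "{y. w y \<noteq> 0} \<subseteq> M"
      proof
        fix y assume "y \<in> {y. w y \<noteq> 0}"
        show "y \<in> M"
        proof (rule ccontr)
          assume "y \<notin> M"
          then have "(\<lambda>x. if x = y then 1 else 0) \<in> S"
            unfolding S_def using PL(1) by (intro CollectI bexI[of _ "\<lambda>_. 0"]) auto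
          then have "(\<Sum>t\<in>UNIV. w t * (if t = y then 1 else 0)) = 0" using bspec[OF w1] by simp
          then have "w y = 0" by (simp add: if_distrib cong: if_cong)
          with \<open>y \<in> {y. w y \<noteq> 0}\<close> show False by simp
        qed
      qed
      have wbox: "w \<in> boxplus_code C"
      proof (rule ccontr)
        assume "w \<notin> boxplus_code C"
        then obtain u where u1: "\<forall>s\<in>boxplus_code C. (\<Sum>t\<in>UNIV. u t * s t) = 0"
          and u2: "(\<Sum>t\<in>UNIV. u t * w t) \<noteq> 0"
          using separation[OF boxplus_lin[OF assms]] by blast
        have "u \<in> P"
          unfolding P_def prod_code_iff dual_code_def
        proof (intro allI CollectI ballI)
          fix i x c assume c: "c \<in> C i"
          have "emb i x c \<in> boxplus_code C"
            using dir_in_boxplus[OF assms emb_dir] assms c by blast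
          then have "(\<Sum>y\<in>UNIV. u y * emb i x c y) = 0" using u1 by blast
          then show "(\<Sum>t\<in>UNIV. restr u i x t * c t) = 0" by (simp add: ip_emb)
        qed
        then have "u \<in> S" unfolding S_def by blast
        then have "(\<Sum>t\<in>UNIV. w t * u t) = 0" using w1 by blast
        with u2 show False by (simp add: mult.commute)
      qed
      then have "w \<in> inner_span C M" using IG wsupp by (auto simp: inner_generated_def)
      then obtain g where g: "\<forall>p\<in>lines_in M. g p \<in> line_code C (fst p) (snd p)"
        and wg: "w = (\<Sum>p\<in>lines_in M. g p)"
        unfolding inner_span_def by blast
      have "(\<Sum>t\<in>UNIV. w t * cM t) = (\<Sum>t\<in>UNIV. \<Sum>p\<in>lines_in M. g p t * cM t)"
        by (simp add: wg sum_fun_app sum_distrib_right)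
      also have "\<dots> = (\<Sum>p\<in>lines_in M. \<Sum>t\<in>UNIV. g p t * cM t)"
        by (rule sum.swap)
      also have "\<dots> = 0"
      proof (rule sum.neutral, rule ballI)
        fix p assume p: "p \<in> lines_in M"
        obtain i L where pe: "p = (i, L)" by (cases p)
        with p obtain x where Lx: "L = line i x" and LM: "L \<subseteq> M"
          by (auto simp: lines_in_iff)
        have gp: "g p \<in> line_code C i L" using g p pe by auto
        have "(\<Sum>t\<in>UNIV. g p t * cM t) = (\<Sum>t\<in>UNIV. g p (x(i:=t)) * cM (x(i:=t)))"
          by (rule sum_line) (use gp Lx in \<open>auto simp: line_code_def\<close>)
        also have "\<dots> = (\<Sum>t\<in>UNIV. restr cM i x t * restr (g p) i x t)"
          by (simp add: restr_def mult.commute)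
        also have "\<dots> = 0"
        proof -
          have "restr cM i x \<in> dual_code (C i)" using H p pe Lx line_self by fastforce
          moreover have "restr (g p) i x \<in> C i" using gp Lx line_self[of x i] unfolding line_code_def by blast
          ultimately show ?thesis by (simp add: dual_code_def)
        qed
        finally show "(\<Sum>t\<in>UNIV. g p t * cM t) = 0" .
      qed
      finally show False using w2 by simp
    qed
  qed
next
  assume E: "extendable (\<lambda>i. dual_code (C i)) M"
  show "inner_generated C M"
    unfolding inner_generated_def
  proof (intro ballI impI)
    fix w assume wb: "w \<in> boxplus_code C" and ws: "{y. w y \<noteq> 0} \<subseteq> M"
    show "w \<in> inner_span C M"
    proof (rule ccontr)
      assume "w \<notin> inner_span C M"
      then obtain u where u1: "\<forall>s\<in>inner_span C M. (\<Sum>t\<in>UNIV. u t * s t) = 0"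
        and u2: "(\<Sum>t\<in>UNIV. u t * w t) \<noteq> 0"
        using separation[OF inner_span_lin[OF assms]] by blast
      have "\<forall>(i, L)\<in>lines_in M. \<forall>x\<in>L. restr u i x \<in> dual_code (C i)"
      proof (intro ballI, clarify)
        fix i L x assume iL: "(i, L) \<in> lines_in M" and xL: "x \<in> L"
        then obtain x0 where "L = line i x0" by (auto simp: lines_in_iff)
        with xL have Lx: "L = line i x" using line_eq by metis
        show "restr u i x \<in> dual_code (C i)"
          unfolding dual_code_def
        proof (intro CollectI ballI)
          fix c assume c: "c \<in> C i"
          have e: "emb i x c \<in> line_code C i L" using emb_line_code[of C i c x] c assms Lx by blast
          have z: "(\<lambda>_. 0) \<in> line_code C j L'" for j L' using line_code_lin[OF assms] by blast
          have "\<forall>p\<in>lines_in M. (if p = (i, L) then emb i x c else 0) \<in> line_code C (fst p) (snd p)"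
            using e z by (auto simp: zero_fun_def)
          moreover have "emb i x c = (\<Sum>p\<in>lines_in M. (if p = (i, L) then emb i x c else 0))"
            using iL by simp
          ultimately have "emb i x c \<in> inner_span C M" unfolding inner_span_def by blast
          then have "(\<Sum>y\<in>UNIV. u y * emb i x c y) = 0" using u1 by blast
          then show "(\<Sum>t\<in>UNIV. restr u i x t * c t) = 0" by (simp add: ip_emb)
        qed
      qed
      then obtain c where c: "c \<in> prod_code (\<lambda>i. dual_code (C i))" and cu: "\<forall>y\<in>M. c y = u y"
        using E unfolding extendable_def by blast
      have "(\<Sum>t\<in>UNIV. u t * w t) = (\<Sum>t\<in>UNIV. c t * w t)"
      proof (rule sum.cong[OF refl])
        fix t show "u t * w t = c t * w t"
          using cu ws by (cases "t \<in> M") auto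
      qed
      also have "\<dots> = 0" by (rule orth_boxplus[OF c wb])
      finally show False using u2 by simp
    qed
  qed
qed

end
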